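(* Let $p\ge 1$, $s>0$ and $\lambda>0$. Let $\tilde{W}\in\mathbb{R}^{p\times p}$. Let $\hat{W}$ be a projection of $\tilde{W}$ onto the $\log\det$ level set $\mathcal{D}_s:=\{W\in\mathbb{W}^s: h_s(W)=0\}$, i.e. $\hat W\in\arg\min_{W\in\mathcal{D}_s}\tfrac12\|\tilde W-W\|_F^2$, and let $W^\star$ be the (Euclidean/Frobenius) projection of $\hat{W}$ onto the $\ell_1$ ball $\mathcal{B}_\lambda:=\{W\in\mathbb{R}^{p\times p}:\|W\|_{\ell_1}\le\lambda\}$. Then $W^\star$ lies in the intersection $\mathcal{D}_s\cap\mathcal{B}_\lambda$, i.e. $W^\star\in\mathbb{W}^s$, $h_s(W^\star)=0$ and $\|W^\star\|_{\ell_1}\le\lambda$.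
   Context: For $W\in\mathbb{R}^{p\times p}$, $W\circ W$ denotes the entrywise (Hadamard) square, $\rho(\cdot)$ the spectral radius, and $\|W\|_{\ell_1}:=\sum_{j,k}|\mathsf{w}_{jk}|$. Define $\mathbb{W}^s:=\{W\in\mathbb{R}^{p\times p}:\rho(W\circ W)<s\}$ and, for $W\in\mathbb{W}^s$, $h_s(W):=-\log\det(sI-W\circ W)+p\log(s)$. (It is known that for $W\in\mathbb{W}^s$, $h_s(W)=0$ iff the directed graph with weighted adjacency matrix $W$ — an edge $j\to k$ iff $\mathsf{w}_{jk}\neq0$ — is acyclic.) *)

theory Defs
  imports Complex_Main "Jordan_Normal_Form.Spectral_Radius"
begin

definition hadamard_sq :: "real mat \<Rightarrow> real mat" where
  "hadamard_sq W = mat (dim_row W) (dim_col W) (\<lambda>(i,j). (W $$ (i,j))^2)"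

definition W_set :: "nat \<Rightarrow> real \<Rightarrow> real mat set" where
  "W_set p s = {W \<in> carrier_mat p p.
      spectral_radius (map_mat complex_of_real (hadamard_sq W)) < s}"

definition h_logdet :: "real \<Rightarrow> real mat \<Rightarrow> real" where
  "h_logdet s W = - ln (det (s \<cdot>\<^sub>m 1\<^sub>m (dim_row W) - hadamard_sq W)) + real (dim_row W) * ln s"

definition l1_norm :: "real mat \<Rightarrow> real" where
  "l1_norm W = (\<Sum>j<dim_row W. \<Sum>k<dim_col W. \<bar>W $$ (j,k)\<bar>)"

definition frob_sq :: "real mat \<Rightarrow> real" where
  "frob_sq W = (\<Sum>j<dim_row W. \<Sum>k<dim_col W. (W $$ (j,k))^2)"

definition D_set :: "nat \<Rightarrow> real \<Rightarrow> real mat set" where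
  "D_set p s = {W \<in> W_set p s. h_logdet s W = 0}"

definition l1_ball :: "nat \<Rightarrow> real \<Rightarrow> real mat set" where
  "l1_ball p lam = {W \<in> carrier_mat p p. l1_norm W \<le> lam}"

definition is_projection :: "real mat set \<Rightarrow> real mat \<Rightarrow> real mat \<Rightarrow> bool" where
  "is_projection C X Y \<longleftrightarrow> Y \<in> C \<and> (\<forall>V\<in>C. frob_sq (X - Y) / 2 \<le> frob_sq (X - V) / 2)"

end

theory Submission
  imports Defs "HOL-Analysis.Complex_Transcendental"
begin

definition mtr :: "'a::comm_ring_1 mat \<Rightarrow> 'a" where
  "mtr M = (\<Sum>i<dim_row M. M $$ (i,i))"

lemma mtr_comm:
  assumes X: "X \<in> carrier_mat n n" and Y: "Y \<in> carrier_mat n n"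
  shows "mtr (X * Y) = mtr (Y * X)"
proof -
  have "mtr (X * Y) = (\<Sum>i<n. \<Sum>j<n. X $$ (i,j) * Y $$ (j,i))"
    using X Y by (simp add: mtr_def scalar_prod_def atLeast0LessThan)
  also have "\<dots> = (\<Sum>j<n. \<Sum>i<n. Y $$ (j,i) * X $$ (i,j))"
    by (subst sum.swap) (simp add: mult.commute)
  also have "\<dots> = mtr (Y * X)"
    using X Y by (simp add: mtr_def scalar_prod_def atLeast0LessThan)
  finally show ?thesis .
qed

lemma ut_pow:
  fixes T :: "'a::comm_ring_1 mat"
  assumes T: "T \<in> carrier_mat n n" and ut: "upper_triangular T"
  shows "upper_triangular (T ^\<^sub>m k) \<and> (\<forall>i<n. (T ^\<^sub>m k) $$ (i,i) = (T $$ (i,i)) ^ k)"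
proof (induction k)
  case 0
  then show ?case using T by auto
next
  case (Suc k)
  have Tk: "T ^\<^sub>m k \<in> carrier_mat n n" using T by simp
  from Suc have utk: "upper_triangular (T ^\<^sub>m k)" and dk: "\<forall>i<n. (T ^\<^sub>m k) $$ (i,i) = (T $$ (i,i)) ^ k" by auto
  have e: "(T ^\<^sub>m Suc k) $$ (i,j) = (\<Sum>l<n. (T ^\<^sub>m k) $$ (i,l) * T $$ (l,j))" if "i < n" "j < n" for i j
    using that T Tk by (simp add: scalar_prod_def atLeast0LessThan)
  have "upper_triangular (T ^\<^sub>m Suc k)"
  proof (rule upper_triangularI)
    fix i j assume ji: "j < i" and i: "i < dim_row (T ^\<^sub>m Suc k)"
    hence i': "i < n" using T by simp
    have "(\<Sum>l<n. (T ^\<^sub>m k) $$ (i,l) * T $$ (l,j)) = 0"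
    proof (rule sum.neutral, intro ballI)
      fix l assume l: "l \<in> {..<n}"
      show "(T ^\<^sub>m k) $$ (i,l) * T $$ (l,j) = 0"
      proof (cases "l < i")
        case True
        then show ?thesis using upper_triangularD[OF utk True] i' Tk T by simp
      next
        case False
        then have "j < l" using ji by simp
        then show ?thesis using upper_triangularD[OF ut \<open>j < l\<close>] l T by simp
      qed
    qed
    then show "(T ^\<^sub>m Suc k) $$ (i,j) = 0" using e[OF i'] ji i' by simp
  qed
  moreover have "(T ^\<^sub>m Suc k) $$ (i,i) = (T $$ (i,i)) ^ Suc k" if i: "i < n" for i
  proof -
    have "(\<Sum>l<n. (T ^\<^sub>m k) $$ (i,l) * T $$ (l,i)) = (\<Sum>l<n. if l = i then (T $$ (i,i)) ^ Suc k else 0)"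
    proof (rule sum.cong[OF refl])
      fix l assume l: "l \<in> {..<n}"
      show "(T ^\<^sub>m k) $$ (i,l) * T $$ (l,i) = (if l = i then (T $$ (i,i)) ^ Suc k else 0)"
      proof (cases "l < i")
        case True
        then show ?thesis using upper_triangularD[OF utk True] i Tk T by simp
      next
        case False
        show ?thesis
        proof (cases "l = i")
          case True then show ?thesis using dk i by (simp add: mult.commute)
        next
          case False
          then have "i < l" using \<open>\<not> l < i\<close> by simp
          then show ?thesis using upper_triangularD[OF ut \<open>i < l\<close>] l T False by simp
        qed
      qed
    qed
    also have "\<dots> = (T $$ (i,i)) ^ Suc k" using i by simp
    finally show ?thesis using e[OF i i] by simp
  qed
  ultimately show ?case by blast
qed

lemma mtr_similar_pow:
  assumes M: "M \<in> carrier_mat n n" and wit: "similar_mat_wit M T P Q"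
  shows "mtr (M ^\<^sub>m k) = mtr (T ^\<^sub>m k)"
proof -
  note d = similar_mat_witD2[OF M wit]
  have T: "T \<in> carrier_mat n n" and P: "P \<in> carrier_mat n n" and Q: "Q \<in> carrier_mat n n"
    and QP: "Q * P = 1\<^sub>m n" using d by auto
  have Tk: "T ^\<^sub>m k \<in> carrier_mat n n" using T by simp
  have "mtr (M ^\<^sub>m k) = mtr ((P * T ^\<^sub>m k) * Q)" using similar_mat_wit_pow_id[OF wit] by simp
  also have "\<dots> = mtr (Q * (P * T ^\<^sub>m k))" by (rule mtr_comm[OF _ Q], insert P Tk, auto)
  also have "Q * (P * T ^\<^sub>m k) = (Q * P) * T ^\<^sub>m k" using P Q Tk by (simp add: assoc_mult_mat)
  also have "\<dots> = T ^\<^sub>m k" using QP left_mult_one_mat[OF Tk] by simp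
  finally show ?thesis .
qed


lemma char_poly_exp:
  fixes M :: "complex mat" and r :: real
  assumes M: "M \<in> carrier_mat n n" and r: "r > 0"
    and roots: "\<And>x. poly (char_poly M) x = 0 \<Longrightarrow> cmod x < r"
  shows "\<exists>S. (\<lambda>k. mtr (M ^\<^sub>m k) / (of_nat k * of_real r ^ k)) sums S
     \<and> poly (char_poly M) (of_real r) = of_real r ^ n * exp (- S)"
proof -
  obtain es where cp: "char_poly M = (\<Prod>a\<leftarrow>es. [:- a, 1:])" and len: "length es = n"
    using char_poly_factorized[OF M] by auto
  obtain T P Q where sd: "schur_decomposition M es = (T,P,Q)" by (cases "schur_decomposition M es", auto)
  from schur_decomposition[OF M cp sd] have wit: "similar_mat_wit M T P Q"
    and ut: "upper_triangular T" and dg: "diag_mat T = es" by auto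
  have T: "T \<in> carrier_mat n n" using similar_mat_witD2[OF M wit] by auto
  have esi: "es ! i = T $$ (i,i)" if "i < n" for i
    using dg that T by (auto simp: diag_mat_def)
  have esr: "cmod (es ! i) < r" if "i < n" for i
  proof -
    have "es ! i \<in> set es" using that len by simp
    from linear_poly_root[OF this] have "poly (char_poly M) (es ! i) = 0" unfolding cp .
    then show ?thesis by (rule roots)
  qed
  define w where "w i = es ! i / of_real r" for i
  have wl: "cmod (w i) < 1" if "i < n" for i
    using esr[OF that] r by (simp add: w_def norm_divide)
  have tr: "mtr (M ^\<^sub>m k) = (\<Sum>i<n. (es ! i) ^ k)" for k
  proof -
    have "mtr (M ^\<^sub>m k) = mtr (T ^\<^sub>m k)" by (rule mtr_similar_pow[OF M wit])
    also have "\<dots> = (\<Sum>i<n. (T ^\<^sub>m k) $$ (i,i))" using T by (simp add: mtr_def)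
    also have "\<dots> = (\<Sum>i<n. (es ! i) ^ k)" using ut_pow[OF T ut, of k] esi by simp
    finally show ?thesis .
  qed
  have ser: "(\<lambda>k. - ((w i) ^ k) / of_nat k) sums Ln (1 - w i)" if "i < n" for i
    using Ln_series'[of "- w i"] wl[OF that] by simp
  have "(\<lambda>k. \<Sum>i<n. - ((w i) ^ k) / of_nat k) sums (\<Sum>i<n. Ln (1 - w i))"
    by (rule sums_sum, rule ser, simp)
  moreover have "(\<Sum>i<n. - ((w i) ^ k) / of_nat k) = - (mtr (M ^\<^sub>m k) / (of_nat k * of_real r ^ k))" for k
    unfolding tr w_def
    by (simp add: power_divide sum_divide_distrib[symmetric] sum_negf divide_divide_eq_left mult.commute)
  ultimately have "(\<lambda>k. - (mtr (M ^\<^sub>m k) / (of_nat k * of_real r ^ k))) sums (\<Sum>i<n. Ln (1 - w i))"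
    by simp
  from sums_minus[OF this]
  have S: "(\<lambda>k. mtr (M ^\<^sub>m k) / (of_nat k * of_real r ^ k)) sums (- (\<Sum>i<n. Ln (1 - w i)))"
    by simp
  have nz: "1 - w i \<noteq> 0" if "i < n" for i
    using wl[OF that] by auto
  have "exp (- (- (\<Sum>i<n. Ln (1 - w i)))) = (\<Prod>i<n. 1 - w i)"
    by (simp add: exp_sum, intro prod.cong refl, rule exp_Ln, rule nz, simp)
  moreover have "poly (char_poly M) (of_real r) = of_real r ^ n * (\<Prod>i<n. 1 - w i)"
  proof -
    have "poly (char_poly M) (of_real r) = (\<Prod>a\<leftarrow>es. of_real r - a)"
      unfolding cp poly_prod_list by (simp add: o_def)
    also have "\<dots> = (\<Prod>i<n. of_real r - es ! i)"
      by (subst prod.list_conv_set_nth) (simp add: len atLeast0LessThan)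
    also have "\<dots> = (\<Prod>i<n. of_real r * (1 - w i))"
      using r by (intro prod.cong refl) (simp add: w_def field_simps)
    also have "\<dots> = of_real r ^ n * (\<Prod>i<n. 1 - w i)"
      by (simp add: prod.distrib)
    finally show ?thesis .
  qed
  ultimately show ?thesis using S by metis
qed


lemma sum_change_one:
  fixes f g :: "nat \<Rightarrow> nat \<Rightarrow> real"
  assumes i: "i < p" and j: "j < p"
    and eq: "\<And>a b. a < p \<Longrightarrow> b < p \<Longrightarrow> \<not> (a = i \<and> b = j) \<Longrightarrow> g a b = f a b"
  shows "(\<Sum>a<p. \<Sum>b<p. g a b) = (\<Sum>a<p. \<Sum>b<p. f a b) + (g i j - f i j)"
proof -
  have "(\<Sum>a<p. \<Sum>b<p. g a b) - (\<Sum>a<p. \<Sum>b<p. f a b) = (\<Sum>a<p. \<Sum>b<p. g a b - f a b)"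
    by (simp add: sum_subtractf)
  also have "\<dots> = (\<Sum>a<p. \<Sum>b<p. if a = i then (if b = j then g i j - f i j else 0) else 0)"
    by (intro sum.cong refl) (use eq in auto)
  also have "\<dots> = (\<Sum>a<p. if a = i then g i j - f i j else 0)"
    by (intro sum.cong refl) (use j in auto)
  also have "\<dots> = g i j - f i j" using i by simp
  finally show ?thesis by simp
qed

lemma proj_entry:
  assumes W: "W \<in> carrier_mat p p"
    and pr: "is_projection (l1_ball p lam) W V"
    and i: "i < p" and j: "j < p"
  shows "(V $$ (i,j))^2 \<le> (W $$ (i,j))^2"
proof (rule ccontr)
  assume "\<not> ?thesis"
  hence lt: "(W $$ (i,j))^2 < (V $$ (i,j))^2" by simp
  hence labs: "\<bar>W $$ (i,j)\<bar> < \<bar>V $$ (i,j)\<bar>" using abs_le_square_iff[of "V $$ (i,j)" "W $$ (i,j)"] by linarith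
  have neq: "W $$ (i,j) \<noteq> V $$ (i,j)" using lt by auto
  from pr have Vb: "V \<in> l1_ball p lam" and opt: "\<And>U. U \<in> l1_ball p lam \<Longrightarrow> frob_sq (W - V) / 2 \<le> frob_sq (W - U) / 2"
    unfolding is_projection_def by auto
  from Vb have V: "V \<in> carrier_mat p p" and Vl: "l1_norm V \<le> lam" unfolding l1_ball_def by auto
  define U where "U = Matrix.mat p p (\<lambda>(a,b). if a = i \<and> b = j then W $$ (i,j) else V $$ (a,b))"
  have U: "U \<in> carrier_mat p p" unfolding U_def by simp
  have "l1_norm U = (\<Sum>a<p. \<Sum>b<p. \<bar>U $$ (a,b)\<bar>)" using U by (simp add: l1_norm_def)
  also have "\<dots> = (\<Sum>a<p. \<Sum>b<p. \<bar>V $$ (a,b)\<bar>) + (\<bar>U $$ (i,j)\<bar> - \<bar>V $$ (i,j)\<bar>)"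
    by (rule sum_change_one[OF i j]) (auto simp: U_def)
  also have "\<dots> = l1_norm V + (\<bar>W $$ (i,j)\<bar> - \<bar>V $$ (i,j)\<bar>)"
    using V i j by (simp add: l1_norm_def U_def)
  finally have "l1_norm U < lam" using labs Vl by linarith
  hence "U \<in> l1_ball p lam" using U unfolding l1_ball_def by auto
  from opt[OF this] have le: "frob_sq (W - V) \<le> frob_sq (W - U)" by simp
  have "frob_sq (W - U) = (\<Sum>a<p. \<Sum>b<p. (W $$ (a,b) - U $$ (a,b))^2)"
    using W U by (simp add: frob_sq_def)
  also have "\<dots> = (\<Sum>a<p. \<Sum>b<p. (W $$ (a,b) - V $$ (a,b))^2) + ((W $$ (i,j) - U $$ (i,j))^2 - (W $$ (i,j) - V $$ (i,j))^2)"
    by (rule sum_change_one[OF i j]) (auto simp: U_def)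
  also have "\<dots> = frob_sq (W - V) - (W $$ (i,j) - V $$ (i,j))^2"
    using W V i j by (simp add: frob_sq_def U_def)
  finally have "frob_sq (W - U) < frob_sq (W - V)" using neq by simp
  with le show False by simp
qed

lemma nonneg_pow_le:
  fixes A B :: "real mat"
  assumes A: "A \<in> carrier_mat n n" and B: "B \<in> carrier_mat n n"
    and le: "\<And>i j. i < n \<Longrightarrow> j < n \<Longrightarrow> 0 \<le> A $$ (i,j) \<and> A $$ (i,j) \<le> B $$ (i,j)"
  shows "i < n \<Longrightarrow> j < n \<Longrightarrow> 0 \<le> (A ^\<^sub>m k) $$ (i,j) \<and> (A ^\<^sub>m k) $$ (i,j) \<le> (B ^\<^sub>m k) $$ (i,j)"
proof (induction k arbitrary: i j)
  case 0
  then show ?case using A B by simp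
next
  case (Suc k)
  have Ak: "A ^\<^sub>m k \<in> carrier_mat n n" and Bk: "B ^\<^sub>m k \<in> carrier_mat n n" using A B by auto
  have ea: "(A ^\<^sub>m Suc k) $$ (i,j) = (\<Sum>l<n. (A ^\<^sub>m k) $$ (i,l) * A $$ (l,j))"
    using Suc.prems A Ak by (simp add: scalar_prod_def atLeast0LessThan)
  have eb: "(B ^\<^sub>m Suc k) $$ (i,j) = (\<Sum>l<n. (B ^\<^sub>m k) $$ (i,l) * B $$ (l,j))"
    using Suc.prems B Bk by (simp add: scalar_prod_def atLeast0LessThan)
  have t: "0 \<le> (A ^\<^sub>m k) $$ (i,l) * A $$ (l,j) \<and> (A ^\<^sub>m k) $$ (i,l) * A $$ (l,j) \<le> (B ^\<^sub>m k) $$ (i,l) * B $$ (l,j)"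
    if l: "l < n" for l
  proof -
    from Suc.IH[OF Suc.prems(1) l] have 1: "0 \<le> (A ^\<^sub>m k) $$ (i,l)" "(A ^\<^sub>m k) $$ (i,l) \<le> (B ^\<^sub>m k) $$ (i,l)" by auto
    from le[OF l Suc.prems(2)] have 2: "0 \<le> A $$ (l,j)" "A $$ (l,j) \<le> B $$ (l,j)" by auto
    show ?thesis using 1 2 by (auto intro: mult_mono mult_nonneg_nonneg)
  qed
  have "0 \<le> (\<Sum>l<n. (A ^\<^sub>m k) $$ (i,l) * A $$ (l,j))" by (rule sum_nonneg) (use t in auto)
  moreover have "(\<Sum>l<n. (A ^\<^sub>m k) $$ (i,l) * A $$ (l,j)) \<le> (\<Sum>l<n. (B ^\<^sub>m k) $$ (i,l) * B $$ (l,j))"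
    by (rule sum_mono) (use t in auto)
  ultimately show ?case using ea eb by simp
qed


lemma det_char:
  fixes M :: "real mat"
  assumes M: "M \<in> carrier_mat n n"
  shows "complex_of_real (det (s \<cdot>\<^sub>m 1\<^sub>m n - M)) = poly (char_poly (map_mat complex_of_real M)) (of_real s)"
proof -
  have e: "- (char_matrix M s) = s \<cdot>\<^sub>m 1\<^sub>m n - M"
    by (rule eq_matI) (use M in \<open>auto simp: char_matrix_def\<close>)
  have "poly (char_poly (map_mat complex_of_real M)) (of_real s) = of_real (poly (char_poly M) s)"
    by (simp add: of_real_hom.char_poly_hom[OF M])
  also have "poly (char_poly M) s = det (s \<cdot>\<^sub>m 1\<^sub>m n - M)"
    using char_poly_matrix[OF M] e by simp
  finally show ?thesis by simp
qed

lemma mtr_of_real_pow: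
  fixes M :: "real mat"
  assumes M: "M \<in> carrier_mat n n"
  shows "mtr (map_mat complex_of_real M ^\<^sub>m k) = of_real (mtr (M ^\<^sub>m k))"
proof -
  have "map_mat complex_of_real M ^\<^sub>m k = map_mat complex_of_real (M ^\<^sub>m k)"
    by (rule of_real_hom.mat_hom_pow[OF M, symmetric])
  moreover have "M ^\<^sub>m k \<in> carrier_mat n n" using M by simp
  ultimately show ?thesis using M by (auto simp: mtr_def intro!: sum.cong)
qed

lemma real_det_exp:
  fixes B :: "real mat"
  assumes B: "B \<in> carrier_mat n n" and n: "n > 0" and s: "s > 0"
    and sr: "spectral_radius (map_mat complex_of_real B) < s"
  shows "\<exists>S. (\<lambda>k. mtr (B ^\<^sub>m k) / (of_nat k * s ^ k)) sums S \<and> det (s \<cdot>\<^sub>m 1\<^sub>m n - B) = s ^ n * exp (- S)"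
proof -
  let ?Bc = "map_mat complex_of_real B"
  have Bc: "?Bc \<in> carrier_mat n n" using B by simp
  have roots: "cmod x < s" if "poly (char_poly ?Bc) x = 0" for x
  proof -
    have "x \<in> spectrum ?Bc" using that spectrum_root_char_poly[OF Bc] by simp
    hence "cmod x \<le> spectral_radius ?Bc" using spectral_radius_mem_max(2)[OF Bc n] by auto
    with sr show ?thesis by simp
  qed
  from char_poly_exp[OF Bc s roots] obtain S where
    S: "(\<lambda>k. mtr (?Bc ^\<^sub>m k) / (of_nat k * of_real s ^ k)) sums S"
    and P: "poly (char_poly ?Bc) (of_real s) = of_real s ^ n * exp (- S)" by blast
  have eqf: "(\<lambda>k. mtr (?Bc ^\<^sub>m k) / (of_nat k * of_real s ^ k)) = (\<lambda>k. complex_of_real (mtr (B ^\<^sub>m k) / (of_nat k * s ^ k)))"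
    by (simp add: mtr_of_real_pow[OF B])
  from S[unfolded eqf] have SR: "(\<lambda>k. mtr (B ^\<^sub>m k) / (of_nat k * s ^ k)) sums Re S"
    using sums_Re by fastforce
  from S[unfolded eqf] have "(\<lambda>k. 0) sums Im S"
    using sums_Im by fastforce
  hence "Im S = 0" using sums_unique sums_zero by metis
  hence SS: "S = of_real (Re S)" by (simp add: complex_eq_iff)
  have "complex_of_real (det (s \<cdot>\<^sub>m 1\<^sub>m n - B)) = of_real s ^ n * exp (- of_real (Re S))"
    using det_char[OF B] P SS by metis
  also have "\<dots> = complex_of_real (s ^ n * exp (- Re S))"
    by (simp add: exp_of_real[symmetric])
  finally have "det (s \<cdot>\<^sub>m 1\<^sub>m n - B) = s ^ n * exp (- Re S)" by (simp only: of_real_eq_iff)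
  with SR show ?thesis by blast
qed

lemma trace_zero_char_poly:
  fixes A :: "real mat"
  assumes A: "A \<in> carrier_mat n n" and n: "n > 0"
    and tr: "\<And>k. k \<ge> 1 \<Longrightarrow> mtr (A ^\<^sub>m k) = 0"
  shows "char_poly (map_mat complex_of_real A) = monom 1 n"
proof -
  let ?Ac = "map_mat complex_of_real A"
  have Ac: "?Ac \<in> carrier_mat n n" using A by simp
  define R where "R = max 0 (spectral_radius ?Ac)"
  have val: "poly (char_poly ?Ac) (of_real r) = of_real r ^ n" if r: "r > R" for r
  proof -
    have r0: "r > 0" using r by (simp add: R_def)
    have roots: "cmod x < r" if "poly (char_poly ?Ac) x = 0" for x
    proof -
      have "x \<in> spectrum ?Ac" using that spectrum_root_char_poly[OF Ac] by simp
      hence "cmod x \<le> spectral_radius ?Ac" using spectral_radius_mem_max(2)[OF Ac n] by auto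
      with r show ?thesis by (simp add: R_def)
    qed
    from char_poly_exp[OF Ac r0 roots] obtain S where
      S: "(\<lambda>k. mtr (?Ac ^\<^sub>m k) / (of_nat k * of_real r ^ k)) sums S"
      and P: "poly (char_poly ?Ac) (of_real r) = of_real r ^ n * exp (- S)" by blast
    have "(\<lambda>k. mtr (?Ac ^\<^sub>m k) / (of_nat k * of_real r ^ k)) = (\<lambda>k. 0)"
    proof
      fix k
      show "mtr (?Ac ^\<^sub>m k) / (of_nat k * of_real r ^ k) = 0"
        by (cases "k = 0") (simp_all add: mtr_of_real_pow[OF A] tr)
    qed
    with S have "S = 0" using sums_unique sums_zero by metis
    with P show ?thesis by simp
  qed
  let ?q = "char_poly ?Ac - monom 1 n"
  have sub: "complex_of_real ` {R<..} \<subseteq> {x. poly ?q x = 0}"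
    using val by (auto simp: poly_monom)
  have "infinite (complex_of_real ` {R<..})"
  proof
    assume "finite (complex_of_real ` {R<..})"
    hence "finite {R<..}" by (rule finite_imageD) (auto simp: inj_on_def)
    thus False by (simp add: infinite_Ioi)
  qed
  hence "infinite {x. poly ?q x = 0}" using sub finite_subset by blast
  hence "?q = 0" using poly_roots_finite by blast
  thus ?thesis by simp
qed


theorem proposition1:
  fixes p :: nat and s lam :: real and W_tilde W_hat W_star :: "real mat"
  assumes "p \<ge> 1" and "s > 0" and "lam > 0"
    and "W_tilde \<in> carrier_mat p p"
    and "is_projection (D_set p s) W_tilde W_hat"
    and "is_projection (l1_ball p lam) W_hat W_star"
  shows "W_star \<in> W_set p s \<and> h_logdet s W_star = 0 \<and> l1_norm W_star \<le> lam"
proof -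
  have n: "p > 0" using assms(1) by simp
  have s: "s > 0" by fact
  from assms(5) have "W_hat \<in> D_set p s" unfolding is_projection_def by auto
  hence Wh: "W_hat \<in> carrier_mat p p"
    and srB: "spectral_radius (map_mat complex_of_real (hadamard_sq W_hat)) < s"
    and h0: "h_logdet s W_hat = 0"
    unfolding D_set_def W_set_def by auto
  from assms(6) have "W_star \<in> l1_ball p lam" unfolding is_projection_def by auto
  hence Ws: "W_star \<in> carrier_mat p p" and l1: "l1_norm W_star \<le> lam"
    unfolding l1_ball_def by auto
  define B where "B = hadamard_sq W_hat"
  define A where "A = hadamard_sq W_star"
  have B: "B \<in> carrier_mat p p" using Wh by (simp add: B_def hadamard_sq_def)
  have A: "A \<in> carrier_mat p p" using Ws by (simp add: A_def hadamard_sq_def)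
  have Bij: "B $$ (i,j) = (W_hat $$ (i,j))^2" if "i < p" "j < p" for i j
    using that Wh by (simp add: B_def hadamard_sq_def)
  have Aij: "A $$ (i,j) = (W_star $$ (i,j))^2" if "i < p" "j < p" for i j
    using that Ws by (simp add: A_def hadamard_sq_def)
  have AB: "0 \<le> A $$ (i,j) \<and> A $$ (i,j) \<le> B $$ (i,j)" if "i < p" "j < p" for i j
    using proj_entry[OF Wh assms(6) that] Aij[OF that] Bij[OF that] by simp
  have BB: "0 \<le> B $$ (i,j) \<and> B $$ (i,j) \<le> B $$ (i,j)" if "i < p" "j < p" for i j
    using Bij[OF that] by simp
  from real_det_exp[OF B n s srB[folded B_def]] obtain S where
    S: "(\<lambda>k. mtr (B ^\<^sub>m k) / (of_nat k * s ^ k)) sums S"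
    and D: "det (s \<cdot>\<^sub>m 1\<^sub>m p - B) = s ^ p * exp (- S)" by blast
  have "h_logdet s W_hat = - ln (s ^ p * exp (- S)) + real p * ln s"
    using D Wh by (simp add: h_logdet_def B_def)
  also have "\<dots> = S" using s by (simp add: ln_mult ln_realpow)
  finally have S0: "S = 0" using h0 by simp
  have Bk_nonneg: "0 \<le> (B ^\<^sub>m k) $$ (i,j)" if "i < p" "j < p" for i j k
    using nonneg_pow_le[OF B B BB that] by simp
  have cnn: "0 \<le> mtr (B ^\<^sub>m k) / (of_nat k * s ^ k)" for k
  proof -
    have "0 \<le> mtr (B ^\<^sub>m k)" using B Bk_nonneg by (simp add: mtr_def, intro sum_nonneg, simp)
    thus ?thesis using s by simp
  qed
  have c0: "mtr (B ^\<^sub>m k) / (of_nat k * s ^ k) = 0" for k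
    using suminf_eq_zero_iff[OF sums_summable[OF S] cnn] S S0 sums_unique by metis
  have trB: "mtr (B ^\<^sub>m k) = 0" if "k \<ge> 1" for k
    using c0[of k] that s by simp
  have trA: "mtr (A ^\<^sub>m k) = 0" if k: "k \<ge> 1" for k
  proof -
    have "(\<Sum>i<p. (B ^\<^sub>m k) $$ (i,i)) = 0" using trB[OF k] B by (simp add: mtr_def)
    hence Bi: "(B ^\<^sub>m k) $$ (i,i) = 0" if "i < p" for i
      using sum_nonneg_eq_0_iff[of "{..<p}" "\<lambda>i. (B ^\<^sub>m k) $$ (i,i)"] Bk_nonneg that by auto
    have "(A ^\<^sub>m k) $$ (i,i) = 0" if "i < p" for i
      using nonneg_pow_le[OF A B AB that that, of k] Bi[OF that] by simp
    thus ?thesis using A by (simp add: mtr_def)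
  qed
  have cpA: "char_poly (map_mat complex_of_real A) = monom 1 p"
    by (rule trace_zero_char_poly[OF A n trA])
  have Ac: "map_mat complex_of_real A \<in> carrier_mat p p" using A by simp
  have "spectrum (map_mat complex_of_real A) = {0}"
    using spectrum_root_char_poly[OF Ac] cpA n by (auto simp: poly_monom)
  hence sr: "spectral_radius (map_mat complex_of_real A) = 0"
    by (simp add: spectral_radius_def)
  have "complex_of_real (det (s \<cdot>\<^sub>m 1\<^sub>m p - A)) = complex_of_real (s ^ p)"
    using det_char[OF A] cpA by (simp add: poly_monom)
  hence dA: "det (s \<cdot>\<^sub>m 1\<^sub>m p - A) = s ^ p" by (simp only: of_real_eq_iff)
  have h: "h_logdet s W_star = 0"
    using dA Ws s by (simp add: h_logdet_def A_def ln_realpow)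
  have "W_star \<in> W_set p s" using Ws sr s by (simp add: W_set_def A_def)
  with h l1 show ?thesis by simp
qed

end
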